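(* Let $\alpha>0$, let $K\subseteq\mathbb{R}^d$ be a closed convex cone and $P\in\mathbb{R}^{d\times d}$ non-singular, and set $K'=PK=\{Px:x\in K\}$. Let $\mathcal{A}=\{y\in\mathbb{R}^d: x^Ty\le\|Px\|\,\alpha\ \text{for all }x\in K\}$ and $\mathcal{B}=P^T\big(\{\tilde{y}\in\mathbb{R}^d:\|p_{K'}(\tilde{y})\|\le\alpha\}\big)=\{P^T\tilde{y}:\|p_{K'}(\tilde{y})\|\le\alpha\}$. Then $\mathcal{A}=\mathcal{B}$.
   Context: $\|\cdot\|$ is the Euclidean norm. For a closed convex set $C\subset\mathbb{R}^d$ and $y\in\mathbb{R}^d$, the projection $p_C(y)$ is the unique point of $C$ with $\|p_C(y)-y\|=\inf_{x\in C}\|x-y\|$. *)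

theory Defs
  imports "HOL-Analysis.Analysis"
begin

definition proj :: "('a::euclidean_space) set \<Rightarrow> 'a \<Rightarrow> 'a" where
  "proj C y = (THE p. p \<in> C \<and> norm (p - y) = (INF x\<in>C. norm (x - y)))"

end

theory Submission
  imports Defs
begin

lemma proj_eq_closest:
  fixes C :: "'a::euclidean_space set"
  assumes "closed C" "convex C" "C \<noteq> {}"
  shows "proj C y = closest_point C y"
  unfolding proj_def
proof (rule the_equality)
  let ?c = "closest_point C y"
  have cin: "?c \<in> C" using closest_point_in_set[OF assms(1,3)] .
  have cle: "\<And>x. x \<in> C \<Longrightarrow> norm (?c - y) \<le> norm (x - y)"
    using closest_point_le[OF assms(1)] by (metis dist_norm dist_commute)
  show "?c \<in> C \<and> norm (?c - y) = (INF x\<in>C. norm (x - y))"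
    using cin cle by (auto intro!: cInf_eq_minimum[symmetric])
  fix p assume p: "p \<in> C \<and> norm (p - y) = (INF x\<in>C. norm (x - y))"
  have "\<forall>z\<in>C. dist y p \<le> dist y z"
  proof
    fix z assume "z \<in> C"
    have "(INF x\<in>C. norm (x - y)) \<le> norm (z - y)"
      by (rule cINF_lower[OF _ \<open>z \<in> C\<close>]) (auto intro: bdd_belowI[of _ 0])
    then show "dist y p \<le> dist y z" using p by (simp add: dist_norm norm_minus_commute)
  qed
  then show "p = ?c" using closest_point_unique[OF assms(2,1)] p by blast
qed

lemma cone_proj_char:
  fixes C :: "'a::euclidean_space set"
  assumes "closed C" "convex C" "cone C" "0 \<in> C" "\<alpha> > 0"
  shows "norm (closest_point C y) \<le> \<alpha> \<longleftrightarrow> (\<forall>z\<in>C. z \<bullet> y \<le> norm z * \<alpha>)"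
proof -
  let ?p = "closest_point C y"
  have ne: "C \<noteq> {}" using assms by auto
  have pin: "?p \<in> C" using closest_point_in_set[OF assms(1) ne] .
  have dot: "\<And>x. x \<in> C \<Longrightarrow> (y - ?p) \<bullet> (x - ?p) \<le> 0"
    using closest_point_dot[OF assms(2,1)] by blast
  have "2 *\<^sub>R ?p \<in> C" using assms(3) pin by (simp add: cone_def)
  from dot[OF this] dot[OF assms(4)]
  have orth: "(y - ?p) \<bullet> ?p = 0"
    by (simp add: inner_diff_right inner_scaleR_right algebra_simps)
  have key: "\<And>z. z \<in> C \<Longrightarrow> z \<bullet> y \<le> z \<bullet> ?p"
  proof -
    fix z assume "z \<in> C"
    from dot[OF this] orth have "(y - ?p) \<bullet> z \<le> 0"
      by (simp add: inner_diff_right)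
    then show "z \<bullet> y \<le> z \<bullet> ?p" by (simp add: inner_diff_right inner_commute)
  qed
  show ?thesis
  proof
    assume h: "norm ?p \<le> \<alpha>"
    show "\<forall>z\<in>C. z \<bullet> y \<le> norm z * \<alpha>"
    proof
      fix z assume z: "z \<in> C"
      have "z \<bullet> ?p \<le> norm z * norm ?p" by (rule Cauchy_Schwarz_ineq2[THEN abs_le_D1])
      also have "\<dots> \<le> norm z * \<alpha>" using h by (simp add: mult_left_mono)
      finally show "z \<bullet> y \<le> norm z * \<alpha>" using key[OF z] by linarith
    qed
  next
    assume h: "\<forall>z\<in>C. z \<bullet> y \<le> norm z * \<alpha>"
    have "?p \<bullet> y = ?p \<bullet> ?p" using orth by (simp add: inner_diff_right inner_commute algebra_simps)
    moreover have "norm ?p * norm ?p = ?p \<bullet> ?p"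
      by (simp add: power2_norm_eq_inner[symmetric] power2_eq_square)
    ultimately have "norm ?p * norm ?p \<le> norm ?p * \<alpha>" using h pin
      by (metis mult.commute)
    then show "norm ?p \<le> \<alpha>" using assms(5)
      by (cases "norm ?p = 0") (auto simp: mult_le_cancel_left)
  qed
qed

theorem mainTheorem17:
  fixes \<alpha> :: real and K :: "(real^'n) set" and P :: "real^'n^'n"
  assumes "\<alpha> > 0"
    and "closed K" and "convex K" and "cone K" and "0 \<in> K"
    and "invertible P"
  defines "K' \<equiv> (\<lambda>x. P *v x) ` K"
  shows "{y. \<forall>x\<in>K. x \<bullet> y \<le> norm (P *v x) * \<alpha>}
       = (\<lambda>yt. transpose P *v yt) ` {yt. norm (proj K' yt) \<le> \<alpha>}"
proof -
  obtain Q where Q: "P ** Q = mat 1" "Q ** P = mat 1"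
    using assms(6) unfolding invertible_def by blast
  have injP: "inj ((*v) P)" using matrix_left_invertible_injective Q(2) by blast
  have cK: "closed K'" unfolding K'_def
    by (rule closed_injective_linear_image[OF assms(2)]) (use injP in auto)
  have vK: "convex K'" unfolding K'_def
    by (rule convex_linear_image[OF _ assms(3)]) simp
  have coK: "cone K'" using assms(4) unfolding K'_def cone_def
    by (auto simp: matrix_vector_mult_scaleR[symmetric] image_iff)
  have zK: "0 \<in> K'" using assms(5) unfolding K'_def by force
  have ne: "K' \<noteq> {}" using zK by auto
  have tr: "\<And>x yt. x \<bullet> (transpose P *v yt) = (P *v x) \<bullet> yt"
    by (metis inner_commute dot_lmul_matrix transpose_matrix_vector)
  have char: "\<And>yt. norm (proj K' yt) \<le> \<alpha> \<longleftrightarrow> (\<forall>x\<in>K. x \<bullet> (transpose P *v yt) \<le> norm (P *v x) * \<alpha>)"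
    using cone_proj_char[OF cK vK coK zK assms(1)] proj_eq_closest[OF cK vK ne]
    by (simp add: tr[simplified] K'_def)
  show ?thesis
  proof (rule set_eqI, rule iffI)
    fix y assume y: "y \<in> {y. \<forall>x\<in>K. x \<bullet> y \<le> norm (P *v x) * \<alpha>}"
    let ?yt = "transpose Q *v y"
    have eq: "transpose P *v ?yt = y"
      by (simp add: vector_matrix_mul_assoc Q(2))
    show "y \<in> (\<lambda>yt. transpose P *v yt) ` {yt. norm (proj K' yt) \<le> \<alpha>}"
      using y char[of ?yt] eq by (intro image_eqI[of _ _ ?yt]) auto
  next
    fix y assume "y \<in> (\<lambda>yt. transpose P *v yt) ` {yt. norm (proj K' yt) \<le> \<alpha>}"
    then show "y \<in> {y. \<forall>x\<in>K. x \<bullet> y \<le> norm (P *v x) * \<alpha>}" using char by auto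
  qed
qed

end
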